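(* Fix integers $d_1\ge 1$, $\tau\ge 1$, $T\ge 1$, set $d=1+\tau d_1$, and fix a node index $i\in\{1,\dots,d_1\}$. Let the binary time series $\{y^{(j)}_t\}$ follow the generalized linear model described in the context with true parameter $\theta^\star_i\in\Theta$, where $\Theta\subset[0,\infty)^d$ is convex and compact, and suppose the link function $g$ satisfies the standing assumption below. Let $\hat\theta_i\in\Theta$ be a weak solution of the variational inequality $\mathrm{VI}[F^{(i)}_T,\Theta]$. Then for every $\varepsilon\in(0,1)$, with probability at least $1-\varepsilon$, $$ m_g\,\lambda_1\,\|\hat\theta_i-\theta^\star_i\|_2\;\le\;\sqrt{\frac{d\,\log(2d/\varepsilon)}{T}},$$ where $\lambda_1$ is the smallest eigenvalue of $\mathbb{W}_{1:T}=\frac1T\sum_{t=1}^T w_{t-\tau:t-1}w_{t-\tau:t-1}^{\mathsf T}$. In particular, whenever $\lambda_1>0$, $\|\hat\theta_i-\theta^\star_i\|_2\le \frac{1}{m_g\lambda_1}\sqrt{\frac{d\log(2d/\varepsilon)}{T}}$.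
   Context: Data: for $j\in\{1,\dots,d_1\}$, binary values $y^{(j)}_t\in\{0,1\}$ for $t=1-\tau,\dots,T$, where the initial history $\{y^{(j)}_t: t=1-\tau,\dots,0\}$ is given (fixed). For $t\ge1$ define the vector $w_{t-\tau:t-1}=(1,y^{(1)}_{t-1},\dots,y^{(1)}_{t-\tau},\dots,y^{(d_1)}_{t-1},\dots,y^{(d_1)}_{t-\tau})^{\mathsf T}\in\{1\}\times\{0,1\}^{\tau d_1}\subset\mathbb{R}^d$. Let $\mathcal H_{t}$ be the $\sigma$-field generated by the initial history and all $y^{(j)}_s$, $s\le t$, $j=1,\dots,d_1$. Model: for $t=1,\dots,T$, conditionally on $\mathcal H_{t-1}$, $y^{(i)}_t$ is Bernoulli with $\mathbb P(y^{(i)}_t=1\mid\mathcal H_{t-1})=g(w_{t-\tau:t-1}^{\mathsf T}\theta^\star_i)$. Standing assumption on $g$: $g$ is defined on an interval $I\subset\mathbb R$ with values in $[0,1]$, such that $w^{\mathsf T}\theta\in I$ for all $\theta\in\Theta$ and all $w\in\{1\}\times\{0,1\}^{\tau d_1}$; $g$ is continuous, nondecreasing, differentiable on $I$ with $0<m_g\le g'(x)\le M_g$ for all $x\in I$. Empirical vector field: $F^{(i)}_T(\theta)=\frac1T\sum_{t=1}^T w_{t-\tau:t-1}\big(g(w_{t-\tau:t-1}^{\mathsf T}\theta)-y^{(i)}_t\big)$ for $\theta\in\Theta$. A weak solution of $\mathrm{VI}[F,\Theta]$ is a point $\hat\theta\in\Theta$ with $\langle F(\theta),\theta-\hat\theta\rangle\ge0$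 for all $\theta\in\Theta$. *)

theory Defs
  imports "HOL-Probability.Probability"
begin

text \<open>Coordinate k of the regressor w_{t-tau:t-1}, for k in 0..<1+tau*d1:
  k = 0 gives the intercept 1; k = 1 + (j-1)*tau + (l-1) (j in 1..d1, l in 1..tau)
  gives y^(j)_{t-l}.  The trajectory is yf j s (node j, time s).\<close>
definition wcoord :: "nat \<Rightarrow> (nat \<Rightarrow> int \<Rightarrow> real) \<Rightarrow> int \<Rightarrow> nat \<Rightarrow> real" where
  "wcoord \<tau> yf t k =
     (if k = 0 then 1 else yf ((k - 1) div \<tau> + 1) (t - int ((k - 1) mod \<tau> + 1)))"

text \<open>The regressor as a vector of real^'n, where ix enumerates the coordinates
  (a bijection from {..<d} to the index type 'n, d = 1 + tau*d1).\<close>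
definition wvec :: "(nat \<Rightarrow> 'n::finite) \<Rightarrow> nat \<Rightarrow> nat \<Rightarrow> (nat \<Rightarrow> int \<Rightarrow> real) \<Rightarrow> int \<Rightarrow> real ^ 'n" where
  "wvec ix d1 \<tau> yf t = (\<Sum>k<1 + \<tau> * d1. wcoord \<tau> yf t k *\<^sub>R axis (ix k) 1)"

definition FT :: "(real \<Rightarrow> real) \<Rightarrow> (nat \<Rightarrow> 'n::finite) \<Rightarrow> nat \<Rightarrow> nat \<Rightarrow> nat \<Rightarrow> nat
                   \<Rightarrow> (nat \<Rightarrow> int \<Rightarrow> real) \<Rightarrow> real ^ 'n \<Rightarrow> real ^ 'n" where
  "FT g ix d1 \<tau> T i yf \<theta> =
     (1 / real T) *\<^sub>R (\<Sum>t\<in>{1..int T}.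
        (g (wvec ix d1 \<tau> yf t \<bullet> \<theta>) - yf i t) *\<^sub>R wvec ix d1 \<tau> yf t)"

definition weak_VI_sol :: "('v::real_inner \<Rightarrow> 'v) \<Rightarrow> 'v set \<Rightarrow> 'v \<Rightarrow> bool" where
  "weak_VI_sol F \<Theta> \<theta>h \<longleftrightarrow> \<theta>h \<in> \<Theta> \<and> (\<forall>\<theta>\<in>\<Theta>. inner (F \<theta>) (\<theta> - \<theta>h) \<ge> 0)"

definition Wmat :: "(nat \<Rightarrow> 'n::finite) \<Rightarrow> nat \<Rightarrow> nat \<Rightarrow> nat \<Rightarrow> (nat \<Rightarrow> int \<Rightarrow> real) \<Rightarrow> real ^ 'n ^ 'n" where
  "Wmat ix d1 \<tau> T yf = (1 / real T) *\<^sub>R (\<Sum>t\<in>{1..int T}.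
      (\<chi> a b. wvec ix d1 \<tau> yf t $ a * wvec ix d1 \<tau> yf t $ b))"

definition eigenvalues :: "real ^ 'n ^ 'n \<Rightarrow> real set" where
  "eigenvalues A = {c. \<exists>v. v \<noteq> 0 \<and> A *v v = c *\<^sub>R v}"

definition min_eigenvalue :: "real ^ 'n ^ 'n \<Rightarrow> real" where
  "min_eigenvalue A = Min (eigenvalues A)"

end

theory Submission
  imports Defs
begin



lemma axis_sum_comp:
  fixes ix :: "nat \<Rightarrow> 'n::finite"
  assumes "inj_on ix {..<n}" "m < n"
  shows "(\<Sum>k<n. c k *\<^sub>R axis (ix k) (1::real)) $ ix m = c m"
proof -
  have "(\<Sum>k<n. c k *\<^sub>R axis (ix k) (1::real)) $ ix m = (\<Sum>k<n. if k = m then c k else 0)"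
    unfolding sum_component using assms by (intro sum.cong) (auto simp: axis_def inj_on_def)
  also have "\<dots> = c m" using assms by simp
  finally show ?thesis .
qed

lemma fin_range_meas:
  assumes "finite (hf ` space M)" "\<And>h. {\<omega>\<in>space M. hf \<omega> = h} \<in> sets M"
  shows "(\<lambda>\<omega>. F (hf \<omega>) :: real) \<in> borel_measurable M"
proof -
  have "(\<lambda>\<omega>. \<Sum>h\<in>hf`space M. F h * indicator {\<omega>\<in>space M. hf \<omega> = h} \<omega>) \<in> borel_measurable M"
    using assms by measurable
  moreover have "\<omega> \<in> space M \<Longrightarrow> (\<Sum>h\<in>hf`space M. F h * indicator {\<omega>\<in>space M. hf \<omega> = h} \<omega>) = F (hf \<omega>)" for \<omega>
  proof -
    assume w: "\<omega> \<in> space M"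
    have "(\<Sum>h\<in>hf`space M. F h * indicator {\<omega>\<in>space M. hf \<omega> = h} \<omega>) = (\<Sum>h\<in>hf`space M. if hf \<omega> = h then F h else 0)"
      using w by (intro sum.cong) (auto simp: indicator_def)
    also have "\<dots> = F (hf \<omega>)" using assms(1) w by (simp add: sum.delta)
    finally show ?thesis .
  qed
  ultimately show ?thesis by (rule measurable_cong[THEN iffD1, rotated]) simp
qed




lemma wcoord_idx:
  fixes \<tau> d1 k :: nat and t :: int
  assumes "\<tau> \<ge> 1" "1 \<le> k" "k < 1 + \<tau> * d1"
  shows "(k - 1) div \<tau> + 1 \<in> {1..d1}" "t - int \<tau> \<le> t - int ((k - 1) mod \<tau> + 1)"
        "t - int ((k - 1) mod \<tau> + 1) \<le> t - 1"
proof -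
  have "k - 1 < \<tau> * d1" using assms by simp
  hence "(k - 1) div \<tau> < d1" using assms by (simp add: div_less_iff_less_mult mult.commute)
  thus "(k - 1) div \<tau> + 1 \<in> {1..d1}" by simp
  have "(k - 1) mod \<tau> < \<tau>" using assms by simp
  thus "t - int \<tau> \<le> t - int ((k - 1) mod \<tau> + 1)" by simp
  show "t - int ((k - 1) mod \<tau> + 1) \<le> t - 1" by simp
qed

lemma wvec_comp:
  assumes "inj_on ix {..<1 + \<tau> * d1}" "k < 1 + \<tau> * d1"
  shows "wvec ix d1 \<tau> yf t $ ix k = wcoord \<tau> yf t k"
  unfolding wvec_def using axis_sum_comp[OF assms] .

lemma wvec_inner:
  assumes "bij_betw ix {..<1 + \<tau> * d1} UNIV"
  shows "wvec ix d1 \<tau> yf t \<bullet> x = (\<Sum>k<1 + \<tau> * d1. wcoord \<tau> yf t k * x $ ix k)"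
  unfolding wvec_def inner_sum_left inner_scaleR_left
  by (intro sum.cong refl) (simp add: inner_axis')
  
lemma inner_ix:
  fixes x y :: "real ^ 'n::finite"
  assumes "bij_betw ix {..<n} (UNIV :: 'n set)"
  shows "x \<bullet> y = (\<Sum>k<n. x $ ix k * y $ ix k)"
  unfolding inner_vec_def using sum.reindex_bij_betw[OF assms, of "\<lambda>i. x $ i * y $ i"] by simp

lemma wvec_cong:
  assumes "\<tau> \<ge> 1" "\<forall>j\<in>{1..d1}. \<forall>s. t - int \<tau> \<le> s \<and> s \<le> t - 1 \<longrightarrow> yf j s = yf' j s"
  shows "wvec ix d1 \<tau> yf t = wvec ix d1 \<tau> yf' t"
  unfolding wvec_def
proof (intro sum.cong refl)
  fix k assume k: "k \<in> {..<1 + \<tau> * d1}"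
  show "wcoord \<tau> yf t k *\<^sub>R axis (ix k) 1 = wcoord \<tau> yf' t k *\<^sub>R axis (ix k) 1"
  proof (cases "k = 0")
    case False
    then show ?thesis using wcoord_idx(1)[OF assms(1), where k=k] wcoord_idx(2,3)[OF assms(1), where k=k and t=t] k assms(2) by (auto simp: wcoord_def)
  qed (simp add: wcoord_def)
qed

lemma wvec_binary:
  assumes "\<tau> \<ge> 1" "inj_on ix {..<1 + \<tau> * d1}"
    "\<forall>j\<in>{1..d1}. \<forall>s. t - int \<tau> \<le> s \<and> s \<le> t - 1 \<longrightarrow> yf j s \<in> {0,1}"
  shows "wvec ix d1 \<tau> yf t $ ix 0 = 1 \<and> (\<forall>k\<in>{1..<1 + \<tau> * d1}. wvec ix d1 \<tau> yf t $ ix k \<in> {0, 1})"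
proof -
  have "wvec ix d1 \<tau> yf t $ ix 0 = 1" using wvec_comp[OF assms(2)] by (simp add: wcoord_def)
  moreover have "wvec ix d1 \<tau> yf t $ ix k \<in> {0, 1}" if "k\<in>{1..<1 + \<tau> * d1}" for k
  proof -
    have idx: "(k - 1) div \<tau> + 1 \<in> {1..d1}" "t - int \<tau> \<le> t - int ((k - 1) mod \<tau> + 1)"
      "t - int ((k - 1) mod \<tau> + 1) \<le> t - 1" using that wcoord_idx[OF assms(1)] by auto
    show ?thesis using wvec_comp[OF assms(2), of k] that idx assms(3) by (auto simp: wcoord_def)
  qed
  ultimately show ?thesis by blast
qed




lemma Wmat_mult:
  "Wmat ix d1 \<tau> T yf *v x = (1 / real T) *\<^sub>R (\<Sum>t\<in>{1..int T}. (wvec ix d1 \<tau> yf t \<bullet> x) *\<^sub>R wvec ix d1 \<tau> yf t)"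
proof (subst vec_eq_iff, intro allI)
  fix a
  let ?w = "wvec ix d1 \<tau> yf"
  have "(Wmat ix d1 \<tau> T yf *v x) $ a = (\<Sum>b\<in>UNIV. (1 / real T) * (\<Sum>t\<in>{1..int T}. ?w t $ a * ?w t $ b) * x $ b)"
    by (simp add: Wmat_def matrix_vector_mult_def)
  also have "\<dots> = (1 / real T) * (\<Sum>t\<in>{1..int T}. \<Sum>b\<in>UNIV. ?w t $ a * ?w t $ b * x $ b)"
    by (simp add: sum_distrib_left sum_distrib_right mult.assoc) (rule sum.swap)
  also have "\<dots> = (1 / real T) * (\<Sum>t\<in>{1..int T}. (?w t \<bullet> x) * ?w t $ a)"
    by (simp add: inner_vec_def sum_distrib_left sum_distrib_right mult.commute mult.left_commute)
  finally show "(Wmat ix d1 \<tau> T yf *v x) $ a = ((1 / real T) *\<^sub>R (\<Sum>t\<in>{1..int T}. (?w t \<bullet> x) *\<^sub>R ?w t)) $ a"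
    by simp
qed

lemma Wmat_inner:
  "(Wmat ix d1 \<tau> T yf *v x) \<bullet> z = (1 / real T) * (\<Sum>t\<in>{1..int T}. (wvec ix d1 \<tau> yf t \<bullet> x) * (wvec ix d1 \<tau> yf t \<bullet> z))"
  by (simp add: Wmat_mult inner_sum_left)

lemma Wmat_sym: "(Wmat ix d1 \<tau> T yf *v x) \<bullet> z = x \<bullet> (Wmat ix d1 \<tau> T yf *v z)"
  by (simp add: Wmat_inner inner_commute[of x] mult.commute)

lemma Wmat_quad: "x \<bullet> (Wmat ix d1 \<tau> T yf *v x) = (1 / real T) * (\<Sum>t\<in>{1..int T}. (wvec ix d1 \<tau> yf t \<bullet> x)\<^sup>2)"
  by (simp add: Wmat_sym[symmetric] Wmat_inner power2_eq_square)




lemma quad_coef_zero: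
  fixes a b :: real
  assumes "\<forall>t. 0 \<le> 2 * t * a + t\<^sup>2 * b"
  shows "a = 0"
proof (rule ccontr)
  assume a: "a \<noteq> 0"
  show False
  proof (cases "b \<le> 0")
    case True
    have "0 \<le> 2 * (-a) * a + (-a)\<^sup>2 * b" using assms by blast
    moreover have "a\<^sup>2 > 0" using a by simp
    moreover have "(-a)\<^sup>2 * b \<le> 0" using True by (simp add: mult_nonneg_nonpos)
    ultimately show False by (simp add: power2_eq_square)
  next
    case False
    have "0 \<le> 2 * (-a/b) * a + (-a/b)\<^sup>2 * b" using assms by blast
    also have "\<dots> = - a\<^sup>2 / b" using False by (simp add: field_simps power2_eq_square)
    finally show False using a False by (simp add: divide_nonneg_pos field_simps)
  qed
qed

lemma eig_finite:
  fixes A :: "real ^ 'n::finite ^ 'n"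
  assumes sym: "\<And>x z. (A *v x) \<bullet> z = x \<bullet> (A *v z)"
  shows "finite (eigenvalues A)"
proof -
  define e where "e c = (SOME v. v \<noteq> 0 \<and> A *v v = c *\<^sub>R v)" for c
  have e: "e c \<noteq> 0 \<and> A *v e c = c *\<^sub>R e c" if "c \<in> eigenvalues A" for c
    using that unfolding e_def eigenvalues_def mem_Collect_eq by (rule someI_ex)
  have orth: "e c1 \<bullet> e c2 = 0" if "c1 \<in> eigenvalues A" "c2 \<in> eigenvalues A" "c1 \<noteq> c2" for c1 c2
  proof -
    have "c1 * (e c1 \<bullet> e c2) = (A *v e c1) \<bullet> e c2" using e[OF that(1)] by simp
    also have "\<dots> = e c1 \<bullet> (A *v e c2)" by (rule sym)
    also have "\<dots> = c2 * (e c1 \<bullet> e c2)" using e[OF that(2)] by simp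
    finally show ?thesis using that(3) by simp
  qed
  have inj: "inj_on e (eigenvalues A)"
  proof (rule inj_onI)
    fix c1 c2 assume h: "c1 \<in> eigenvalues A" "c2 \<in> eigenvalues A" "e c1 = e c2"
    show "c1 = c2"
    proof (rule ccontr)
      assume "c1 \<noteq> c2"
      hence "e c1 \<bullet> e c1 = 0" using orth[OF h(1,2)] h(3) by simp
      thus False using e[OF h(1)] by simp
    qed
  qed
  have "independent (e ` eigenvalues A)"
  proof (rule pairwise_orthogonal_independent)
    show "pairwise orthogonal (e ` eigenvalues A)"
      unfolding pairwise_def orthogonal_def using orth by auto
    show "0 \<notin> e ` eigenvalues A" using e by auto
  qed
  hence "finite (e ` eigenvalues A)" using independent_bound by blast
  thus ?thesis using inj finite_imageD by blast
qed

lemma eig_exists: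
  fixes A :: "real ^ 'n::finite ^ 'n"
  assumes sym: "\<And>x z. (A *v x) \<bullet> z = x \<bullet> (A *v z)"
  shows "\<exists>\<mu>\<in>eigenvalues A. \<forall>x. \<mu> * (norm x)\<^sup>2 \<le> x \<bullet> (A *v x)"
proof -
  define f where "f x = x \<bullet> (A *v x)" for x :: "real ^ 'n"
  have cont: "continuous_on (sphere 0 1) f"
    unfolding f_def by (intro continuous_intros matrix_vector_mult_linear_continuous_on[THEN continuous_on_compose2]) auto
  have ne: "sphere (0::real^'n) 1 \<noteq> {}" using norm_axis_1[of undefined] by (auto simp: sphere_def) (metis norm_axis_1)
  obtain v where v: "v \<in> sphere 0 1" "\<forall>y\<in>sphere 0 1. f v \<le> f y"
    using continuous_attains_inf[OF compact_sphere ne cont] by blast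
  define \<mu> where "\<mu> = f v"
  have nv: "norm v = 1" using v by simp
  have fscale: "f (c *\<^sub>R x) = c\<^sup>2 * f x" for c x
    by (simp add: f_def matrix_vector_mult_scaleR power2_eq_square)
  have all: "\<mu> * (norm x)\<^sup>2 \<le> f x" for x
  proof (cases "x = 0")
    case True then show ?thesis by (simp add: f_def)
  next
    case False
    have "(1 / norm x) *\<^sub>R x \<in> sphere 0 1" using False by simp
    hence "\<mu> \<le> f ((1 / norm x) *\<^sub>R x)" using v \<mu>_def by blast
    also have "\<dots> = f x / (norm x)\<^sup>2" by (simp add: fscale power_divide)
    finally show ?thesis using False by (simp add: field_simps)
  qed
  define z where "z = A *v v - \<mu> *\<^sub>R v"
  have expand: "f (v + t *\<^sub>R z) - \<mu> * (norm (v + t *\<^sub>R z))\<^sup>2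
      = 2 * t * (z \<bullet> z) + t\<^sup>2 * (f z - \<mu> * (norm z)\<^sup>2)" for t
  proof -
    have vv: "v \<bullet> v = 1" using nv by (metis inner_real_def norm_eq_sqrt_inner real_sqrt_eq_1_iff mult_1)
    have s: "v \<bullet> (A *v z) = z \<bullet> (A *v v)" using sym[of v z] by (simp add: inner_commute)
    have "f (v + t *\<^sub>R z) = f v + 2 * t * (z \<bullet> (A *v v)) + t\<^sup>2 * f z"
      unfolding f_def using s
      by (simp add: matrix_vector_right_distrib matrix_vector_mult_scaleR inner_add_left inner_add_right
          algebra_simps power2_eq_square sym[of z v])
    moreover have "(norm (v + t *\<^sub>R z))\<^sup>2 = 1 + 2 * t * (z \<bullet> v) + t\<^sup>2 * (norm z)\<^sup>2"
      unfolding power2_norm_eq_inner using vv by (simp add: power2_norm_eq_inner inner_add_left inner_add_right inner_commute algebra_simps power2_eq_square)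
    moreover have "z \<bullet> (A *v v) = z \<bullet> z + \<mu> * (z \<bullet> v)"
      by (simp add: z_def inner_diff_right)
    ultimately show ?thesis by (simp add: \<mu>_def algebra_simps)
  qed
  have "\<forall>t. 0 \<le> 2 * t * (z \<bullet> z) + t\<^sup>2 * (f z - \<mu> * (norm z)\<^sup>2)"
    using all expand by (metis diff_ge_0_iff_ge)
  hence "z \<bullet> z = 0" by (rule quad_coef_zero)
  hence "A *v v = \<mu> *\<^sub>R v" by (simp add: z_def)
  moreover have "v \<noteq> 0" using nv by auto
  ultimately have "\<mu> \<in> eigenvalues A" unfolding eigenvalues_def by blast
  thus ?thesis using all unfolding f_def by blast
qed

lemma min_eig_le:
  fixes A :: "real ^ 'n::finite ^ 'n"
  assumes sym: "\<And>x z. (A *v x) \<bullet> z = x \<bullet> (A *v z)"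
  shows "min_eigenvalue A * (norm x)\<^sup>2 \<le> x \<bullet> (A *v x)"
proof -
  obtain \<mu> where m: "\<mu> \<in> eigenvalues A" "\<forall>x. \<mu> * (norm x)\<^sup>2 \<le> x \<bullet> (A *v x)"
    using eig_exists[OF sym] by blast
  have "min_eigenvalue A \<le> \<mu>" unfolding min_eigenvalue_def using eig_finite[OF sym] m(1) by simp
  hence "min_eigenvalue A * (norm x)\<^sup>2 \<le> \<mu> * (norm x)\<^sup>2" by (simp add: mult_right_mono)
  thus ?thesis using m(2) by (meson order_trans)
qed




locale det =
  fixes d1 \<tau> T i :: nat and ix :: "nat \<Rightarrow> 'n::finite" and \<theta>s :: "real ^ 'n"
    and \<Theta> :: "(real ^ 'n) set" and g g' :: "real \<Rightarrow> real" and I :: "real set" and mg Mg :: real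
  assumes tau: "\<tau> \<ge> 1" and T: "T \<ge> 1" and i: "i \<in> {1..d1}"
    and ix: "bij_betw ix {..<1 + \<tau> * d1} UNIV"
    and Theta_convex: "convex \<Theta>"
    and theta_star: "\<theta>s \<in> \<Theta>"
    and I_interval: "is_interval I"
    and g_range: "\<forall>x\<in>I. 0 \<le> g x \<and> g x \<le> 1"
    and g_in_I: "\<forall>\<theta>\<in>\<Theta>. \<forall>w. (w $ ix 0 = 1 \<and> (\<forall>k\<in>{1..<1 + \<tau> * d1}. w $ ix k \<in> {0, 1}))
                    \<longrightarrow> w \<bullet> \<theta> \<in> I"
    and g_deriv: "\<forall>x\<in>I. (g has_real_derivative g' x) (at x within I)"
    and mg_pos: "0 < mg"
    and g'_bounds: "\<forall>x\<in>I. mg \<le> g' x \<and> g' x \<le> Mg"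
begin

definition binary :: "(nat \<Rightarrow> int \<Rightarrow> real) \<Rightarrow> bool" where
  "binary yf \<longleftrightarrow> (\<forall>j\<in>{1..d1}. \<forall>t\<in>{1 - int \<tau>..int T}. yf j t \<in> {0,1})"

lemma ix_inj: "inj_on ix {..<1 + \<tau> * d1}" using ix bij_betw_def by blast

lemma w_ok:
  assumes "binary yf" "t \<in> {1..int T}" "\<theta> \<in> \<Theta>"
  shows "wvec ix d1 \<tau> yf t \<bullet> \<theta> \<in> I"
proof -
  have "\<forall>j\<in>{1..d1}. \<forall>s. t - int \<tau> \<le> s \<and> s \<le> t - 1 \<longrightarrow> yf j s \<in> {0,1}"
    using assms(1,2) unfolding binary_def by auto
  from wvec_binary[OF tau ix_inj this] show ?thesis using g_in_I assms(3) by blast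
qed

lemma mvt_aux:
  assumes "x \<in> I" "y \<in> I" "y \<le> x"
  shows "mg * (x - y) \<le> g x - g y"
proof -
  have sub: "{y..x} \<subseteq> I"
  proof
    fix z assume "z \<in> {y..x}"
    then show "z \<in> I" using mem_is_interval_1_I[OF I_interval assms(2,1)] by simp
  qed
  define h where "h z = g z - mg * z" for z
  have "\<exists>c\<in>{y..x}. h x - h y = (\<lambda>u. (g' c - mg) * u) (x - y)"
  proof (rule mvt_very_simple[OF assms(3)])
    fix z assume z: "y \<le> z" "z \<le> x"
    hence zI: "z \<in> I" using sub by auto
    have "(g has_real_derivative g' z) (at z within {y..x})"
      using g_deriv zI sub by (meson has_field_derivative_subset)
    hence "(h has_real_derivative (g' z - mg)) (at z within {y..x})"
      unfolding h_def by (rule DERIV_diff[OF _ DERIV_cmult_Id])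
    thus "(h has_derivative (\<lambda>u. (g' z - mg) * u)) (at z within {y..x})"
      by (simp add: has_field_derivative_def mult_commute_abs)
  qed
  then obtain c where c: "c \<in> {y..x}" "h x - h y = (g' c - mg) * (x - y)" by blast
  have "g' c - mg \<ge> 0" using g'_bounds c(1) sub by auto
  hence "h x - h y \<ge> 0" using c(2) assms(3) by simp
  thus ?thesis unfolding h_def by (simp add: algebra_simps)
qed

lemma mvt_sq:
  assumes "x \<in> I" "y \<in> I"
  shows "mg * (x - y)\<^sup>2 \<le> (g x - g y) * (x - y)"
proof (cases "y \<le> x")
  case True
  from mvt_aux[OF assms True] True show ?thesis
    by (simp add: power2_eq_square mult_right_mono mult.assoc[symmetric])
next
  case False
  from mvt_aux[OF assms(2,1)] False have "mg * (y - x) \<le> g y - g x" by simp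
  hence "mg * (y - x) * (y - x) \<le> (g y - g x) * (y - x)" using False by (simp add: mult_right_mono)
  thus ?thesis by (simp add: power2_eq_square algebra_simps)
qed

lemma FT_inner:
  "FT g ix d1 \<tau> T i yf \<theta> \<bullet> z = (1 / real T) * (\<Sum>t\<in>{1..int T}. (g (wvec ix d1 \<tau> yf t \<bullet> \<theta>) - yf i t) * (wvec ix d1 \<tau> yf t \<bullet> z))"
  by (simp add: FT_def inner_sum_left)

lemma FT_diff_inner:
  "(FT g ix d1 \<tau> T i yf \<theta> - FT g ix d1 \<tau> T i yf \<theta>') \<bullet> z
    = (1 / real T) * (\<Sum>t\<in>{1..int T}. (g (wvec ix d1 \<tau> yf t \<bullet> \<theta>) - g (wvec ix d1 \<tau> yf t \<bullet> \<theta>')) * (wvec ix d1 \<tau> yf t \<bullet> z))"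
proof -
  let ?w = "wvec ix d1 \<tau> yf"
  have "(FT g ix d1 \<tau> T i yf \<theta> - FT g ix d1 \<tau> T i yf \<theta>') \<bullet> z
     = (1 / real T) * (\<Sum>t\<in>{1..int T}. (g (?w t \<bullet> \<theta>) - yf i t) * (?w t \<bullet> z) - (g (?w t \<bullet> \<theta>') - yf i t) * (?w t \<bullet> z))"
    by (simp only: inner_diff_left FT_inner right_diff_distrib sum_subtractf)
  also have "\<dots> = (1 / real T) * (\<Sum>t\<in>{1..int T}. (g (?w t \<bullet> \<theta>) - g (?w t \<bullet> \<theta>')) * (?w t \<bullet> z))"
    by (intro arg_cong[where f="\<lambda>x. _ * x"] sum.cong) (auto simp: algebra_simps)
  finally show ?thesis .
qed

lemma strong_mono:
  assumes "binary yf" "\<theta> \<in> \<Theta>"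
  shows "mg * min_eigenvalue (Wmat ix d1 \<tau> T yf) * (norm (\<theta> - \<theta>s))\<^sup>2
         \<le> (FT g ix d1 \<tau> T i yf \<theta> - FT g ix d1 \<tau> T i yf \<theta>s) \<bullet> (\<theta> - \<theta>s)"
proof -
  let ?w = "wvec ix d1 \<tau> yf"
  let ?W = "Wmat ix d1 \<tau> T yf"
  have "mg * min_eigenvalue ?W * (norm (\<theta> - \<theta>s))\<^sup>2 \<le> mg * ((\<theta> - \<theta>s) \<bullet> (?W *v (\<theta> - \<theta>s)))"
    using min_eig_le[OF Wmat_sym] mg_pos by (simp add: mult.assoc)
  also have "\<dots> = (1 / real T) * (\<Sum>t\<in>{1..int T}. mg * (?w t \<bullet> \<theta> - ?w t \<bullet> \<theta>s)\<^sup>2)"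
    by (simp add: Wmat_quad sum_distrib_left inner_diff_right)
  also have "\<dots> \<le> (1 / real T) * (\<Sum>t\<in>{1..int T}. (g (?w t \<bullet> \<theta>) - g (?w t \<bullet> \<theta>s)) * (?w t \<bullet> \<theta> - ?w t \<bullet> \<theta>s))"
    using w_ok[OF assms(1) _ assms(2)] w_ok[OF assms(1) _ theta_star]
    by (intro mult_left_mono sum_mono mvt_sq) auto
  also have "\<dots> = (FT g ix d1 \<tau> T i yf \<theta> - FT g ix d1 \<tau> T i yf \<theta>s) \<bullet> (\<theta> - \<theta>s)"
    by (subst FT_diff_inner) (simp only: inner_diff_right)
  finally show ?thesis .
qed

lemma lim_aux:
  fixes c A :: real
  assumes "\<forall>s. 0 < s \<and> s < 1 \<longrightarrow> (1 - s) * c \<le> A"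
  shows "c \<le> A"
proof (rule ccontr)
  assume "\<not> c \<le> A"
  hence cA: "A < c" by simp
  show False
  proof (cases "c \<le> 0")
    case True
    have "(1 - 1/2) * c \<le> A" using assms[rule_format, of "1/2"] by simp
    thus False using cA True by simp
  next
    case False
    define s where "s = min (1/2) ((c - A) / (2 * c))"
    have s: "0 < s" "s < 1" using False cA by (auto simp: s_def)
    have "s * c \<le> (c - A) / 2" using False by (simp add: s_def min_def field_simps)
    moreover have "(1 - s) * c \<le> A" using assms s by auto
    ultimately show False using cA by (simp add: algebra_simps)
  qed
qed

lemma det_main:
  assumes bin: "binary yf" and sol: "weak_VI_sol (FT g ix d1 \<tau> T i yf) \<Theta> \<theta>h"
  shows "mg * min_eigenvalue (Wmat ix d1 \<tau> T yf) * norm (\<theta>h - \<theta>s) \<le> norm (FT g ix d1 \<tau> T i yf \<theta>s)"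
proof -
  let ?F = "FT g ix d1 \<tau> T i yf"
  let ?l = "min_eigenvalue (Wmat ix d1 \<tau> T yf)"
  define \<Delta> where "\<Delta> = \<theta>h - \<theta>s"
  have th: "\<theta>h \<in> \<Theta>" and weak: "\<forall>\<theta>\<in>\<Theta>. ?F \<theta> \<bullet> (\<theta> - \<theta>h) \<ge> 0"
    using sol unfolding weak_VI_sol_def by auto
  show ?thesis
  proof (cases "?l \<le> 0")
    case True
    hence "mg * ?l * norm \<Delta> \<le> 0" using mg_pos
      by (simp add: mult_nonpos_nonneg mult_nonneg_nonpos)
    thus ?thesis unfolding \<Delta>_def by (meson norm_ge_zero order_trans)
  next
    case False
    define c where "c = mg * ?l * (norm \<Delta>)\<^sup>2"
    define A where "A = - (?F \<theta>s \<bullet> \<Delta>)"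
    have "(1 - s) * c \<le> A" if s: "0 < s" "s < 1" for s
    proof -
      define \<theta>' where "\<theta>' = (1 - s) *\<^sub>R \<theta>h + s *\<^sub>R \<theta>s"
      have th': "\<theta>' \<in> \<Theta>" unfolding \<theta>'_def using Theta_convex th theta_star s
        by (intro convexD) auto
      have d1: "\<theta>' - \<theta>h = (- s) *\<^sub>R \<Delta>" by (simp add: \<theta>'_def \<Delta>_def algebra_simps)
      have d2: "\<theta>' - \<theta>s = (1 - s) *\<^sub>R \<Delta>" by (simp add: \<theta>'_def \<Delta>_def algebra_simps)
      have "0 \<le> ?F \<theta>' \<bullet> (\<theta>' - \<theta>h)" using weak th' by blast
      hence "0 \<le> - s * (?F \<theta>' \<bullet> \<Delta>)" by (simp add: d1)
      hence neg: "?F \<theta>' \<bullet> \<Delta> \<le> 0" using s by (simp add: mult_le_0_iff)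
      have "mg * ?l * (norm (\<theta>' - \<theta>s))\<^sup>2 \<le> (?F \<theta>' - ?F \<theta>s) \<bullet> (\<theta>' - \<theta>s)"
        by (rule strong_mono[OF bin th'])
      moreover have nn: "(norm (\<theta>' - \<theta>s))\<^sup>2 = (1 - s)\<^sup>2 * (norm \<Delta>)\<^sup>2"
        by (simp add: d2 power_mult_distrib)
      moreover have ee: "(?F \<theta>' - ?F \<theta>s) \<bullet> (\<theta>' - \<theta>s) = (1 - s) * (?F \<theta>' \<bullet> \<Delta> - ?F \<theta>s \<bullet> \<Delta>)"
        by (simp only: d2 inner_scaleR_right inner_diff_left)
      ultimately have "mg * ?l * ((1 - s)\<^sup>2 * (norm \<Delta>)\<^sup>2) \<le> (1 - s) * (?F \<theta>' \<bullet> \<Delta> - ?F \<theta>s \<bullet> \<Delta>)"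
        by (simp only:)
      moreover have "mg * ?l * ((1 - s)\<^sup>2 * (norm \<Delta>)\<^sup>2) = (1 - s) * ((1 - s) * c)"
        unfolding c_def power2_eq_square by algebra
      ultimately have "(1 - s) * ((1 - s) * c) \<le> (1 - s) * (?F \<theta>' \<bullet> \<Delta> - ?F \<theta>s \<bullet> \<Delta>)"
        by simp
      hence "(1 - s) * c \<le> ?F \<theta>' \<bullet> \<Delta> - ?F \<theta>s \<bullet> \<Delta>" using s by simp
      thus ?thesis using neg unfolding A_def by simp
    qed
    hence cA: "c \<le> A" by (intro lim_aux) auto
    have "A \<le> norm (?F \<theta>s) * norm \<Delta>" unfolding A_def
      using norm_cauchy_schwarz[of "?F \<theta>s" \<Delta>] Cauchy_Schwarz_ineq2[of "?F \<theta>s" \<Delta>] by linarith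
    hence le: "(mg * ?l * norm \<Delta>) * norm \<Delta> \<le> norm (?F \<theta>s) * norm \<Delta>" using cA
      by (simp add: c_def power2_eq_square mult.assoc)
    show ?thesis
    proof (cases "norm \<Delta> = 0")
      case True then show ?thesis unfolding \<Delta>_def by simp
    next
      case False
      then have "norm \<Delta> > 0" by simp
      then show ?thesis using le unfolding \<Delta>_def by (simp add: mult_le_cancel_right)
    qed
  qed
qed

definition Sk :: "nat \<Rightarrow> (nat \<Rightarrow> int \<Rightarrow> real) \<Rightarrow> int \<Rightarrow> real" where
  "Sk k yf t = (\<Sum>u\<in>{1..t}. (g (wvec ix d1 \<tau> yf u \<bullet> \<theta>s) - yf i u) * (wvec ix d1 \<tau> yf u $ ix k))"

lemma FT_comp: "FT g ix d1 \<tau> T i yf \<theta>s $ ix k = (1 / real T) * Sk k yf (int T)"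
  by (simp add: FT_def Sk_def)

lemma norm_le_coords:
  fixes v :: "real ^ 'n"
  assumes "\<forall>k<1 + \<tau> * d1. \<bar>v $ ix k\<bar> \<le> \<sigma>"
  shows "norm v \<le> sqrt (real (1 + \<tau> * d1) * \<sigma>\<^sup>2)"
proof -
  have "v \<bullet> v = (\<Sum>k<1 + \<tau> * d1. (v $ ix k)\<^sup>2)" by (simp add: inner_ix[OF ix] power2_eq_square)
  also have "\<dots> \<le> (\<Sum>k<1 + \<tau> * d1. \<sigma>\<^sup>2)"
  proof (intro sum_mono)
    fix k assume "k \<in> {..<1 + \<tau> * d1}"
    hence "\<bar>v $ ix k\<bar> \<le> \<sigma>" using assms by auto
    hence "\<bar>v $ ix k\<bar>\<^sup>2 \<le> \<sigma>\<^sup>2" by (intro power_mono) auto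
    thus "(v $ ix k)\<^sup>2 \<le> \<sigma>\<^sup>2" by simp
  qed
  also have "\<dots> = real (1 + \<tau> * d1) * \<sigma>\<^sup>2" by simp
  finally show ?thesis by (simp add: norm_eq_sqrt_inner)
qed

definition rst :: "int \<Rightarrow> (nat \<Rightarrow> int \<Rightarrow> real) \<Rightarrow> nat \<Rightarrow> int \<Rightarrow> real" where
  "rst t yf = (\<lambda>j s. if j \<in> {1..d1} \<and> s \<in> {1 - int \<tau>..t - 1} then yf j s else 0)"

lemma wvec_rst: "1 \<le> u \<Longrightarrow> u \<le> t \<Longrightarrow> wvec ix d1 \<tau> (rst t yf) u = wvec ix d1 \<tau> yf u"
  by (rule wvec_cong[OF tau]) (auto simp: rst_def)

lemma Sk_rst: "t' \<le> t - 1 \<Longrightarrow> Sk k (rst t yf) t' = Sk k yf t'"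
  unfolding Sk_def
proof (intro sum.cong refl)
  fix u assume "t' \<le> t - 1" "u \<in> {1..t'}"
  moreover have "rst t yf i u = yf i u" using i calculation by (auto simp: rst_def)
  ultimately show "(g (wvec ix d1 \<tau> (rst t yf) u \<bullet> \<theta>s) - rst t yf i u) * (wvec ix d1 \<tau> (rst t yf) u $ ix k) =
        (g (wvec ix d1 \<tau> yf u \<bullet> \<theta>s) - yf i u) * (wvec ix d1 \<tau> yf u $ ix k)"
    by (simp add: wvec_rst)
qed

lemma FT_rst: "FT g ix d1 \<tau> T i (rst (int T + 1) yf) = FT g ix d1 \<tau> T i yf"
  unfolding FT_def
proof (intro ext arg_cong[where f="\<lambda>x. _ *\<^sub>R x"] sum.cong refl)
  fix \<theta> u assume "u \<in> {1..int T}"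
  moreover have "rst (int T + 1) yf i u = yf i u" using i calculation by (auto simp: rst_def)
  ultimately show "(g (wvec ix d1 \<tau> (rst (int T + 1) yf) u \<bullet> \<theta>) - rst (int T + 1) yf i u) *\<^sub>R wvec ix d1 \<tau> (rst (int T + 1) yf) u =
        (g (wvec ix d1 \<tau> yf u \<bullet> \<theta>) - yf i u) *\<^sub>R wvec ix d1 \<tau> yf u"
    by (simp add: wvec_rst)
qed

lemma Wmat_rst: "Wmat ix d1 \<tau> T (rst (int T + 1) yf) = Wmat ix d1 \<tau> T yf"
  unfolding Wmat_def by (intro arg_cong[where f="\<lambda>x. _ *\<^sub>R x"] sum.cong refl) (auto simp: wvec_rst)

lemma binary_rst: "binary yf \<Longrightarrow> binary (rst (int T + 1) yf)"
  by (auto simp: binary_def rst_def)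

end



lemma hoeff_aux2:
  fixes h p :: real
  assumes "h \<ge> 0" "0 \<le> p" "p \<le> 1"
  shows "exp (-h * p) * (1 + p * (exp h - 1)) \<le> exp (h\<^sup>2 / 8)"
proof -
  have pos: "1 + p * (exp h - 1) > 0" using assms by (intro add_pos_nonneg mult_nonneg_nonneg) auto
  have "-h * p + ln (1 + p * (exp h - 1)) \<le> h\<^sup>2 / 8" using Hoeffdings_lemma_aux[OF assms(1,2)] by simp
  hence "ln (1 + p * (exp h - 1)) \<le> h\<^sup>2 / 8 + h * p" by simp
  hence "1 + p * (exp h - 1) \<le> exp (h\<^sup>2 / 8 + h * p)" using pos by (metis exp_le_cancel_iff exp_ln)
  hence "exp (-h * p) * (1 + p * (exp h - 1)) \<le> exp (-h * p) * exp (h\<^sup>2 / 8 + h * p)"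
    by (intro mult_left_mono) auto
  also have "\<dots> = exp (h\<^sup>2 / 8)" by (simp add: exp_add[symmetric])
  finally show ?thesis .
qed

lemma bern_hoeff:
  fixes p c lam :: real
  assumes "0 \<le> p" "p \<le> 1" "c \<in> {0,1}"
  shows "p * exp (lam * ((p - 1) * c)) + (1 - p) * exp (lam * ((p - 0) * c)) \<le> exp (lam\<^sup>2 / 8)"
proof (cases "c = 0")
  case True then show ?thesis by simp
next
  case False
  hence c: "c = 1" using assms by auto
  show ?thesis
  proof (cases "lam \<le> 0")
    case True
    have "p * exp (lam * ((p - 1) * c)) + (1 - p) * exp (lam * ((p - 0) * c))
          = exp (-(-lam) * p) * (1 + p * (exp (-lam) - 1))"
      using c by (simp add: algebra_simps exp_add[symmetric] exp_diff)
    also have "\<dots> \<le> exp ((-lam)\<^sup>2 / 8)" using True assms by (intro hoeff_aux2) auto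
    finally show ?thesis by simp
  next
    case False
    have "p * exp (lam * ((p - 1) * c)) + (1 - p) * exp (lam * ((p - 0) * c))
          = exp (-lam * (1 - p)) * (1 + (1 - p) * (exp lam - 1))"
    proof -
      have e2: "exp (lam * ((p - 1) * c)) = exp (-lam * (1 - p))" using c by (simp add: algebra_simps)
      have e3: "exp (lam * ((p - 0) * c)) = exp (-lam * (1 - p)) * exp lam"
        using c by (simp add: exp_add[symmetric] algebra_simps)
      show ?thesis by (simp only: e2 e3) (simp add: algebra_simps)
    qed
    also have "\<dots> \<le> exp (lam\<^sup>2 / 8)" using False assms by (intro hoeff_aux2) auto
    finally show ?thesis by simp
  qed
qed

lemma ind_mult_integrable:
  fixes f :: "'a \<Rightarrow> real"
  shows "A \<in> sets M \<Longrightarrow> integrable M f \<Longrightarrow> integrable M (\<lambda>x. indicator A x * f x)"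
  using integrable_mult_indicator[of A M f] by simp

lemma fin_range_integrable:
  assumes "finite (hf ` space M)" "\<And>h. {\<omega>\<in>space M. hf \<omega> = h} \<in> sets M" "finite_measure M"
  shows "integrable M (\<lambda>\<omega>. F (hf \<omega>) :: real)"
proof -
  interpret finite_measure M by fact
  show ?thesis
  proof (rule integrable_const_bound[where B="\<Sum>h\<in>hf ` space M. \<bar>F h\<bar>"])
    show "AE x in M. norm (F (hf x)) \<le> (\<Sum>h\<in>hf ` space M. \<bar>F h\<bar>)"
    proof (rule AE_I2)
      fix x assume "x \<in> space M"
      thus "norm (F (hf x)) \<le> (\<Sum>h\<in>hf ` space M. \<bar>F h\<bar>)"
        using member_le_sum[of "hf x" "hf ` space M" "\<lambda>h. \<bar>F h\<bar>"] assms(1) by auto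
    qed
    show "(\<lambda>\<omega>. F (hf \<omega>)) \<in> borel_measurable M" by (rule fin_range_meas[OF assms(1,2)])
  qed
qed

lemma fin_range_sets:
  assumes "finite (hf ` space M)" "\<And>h. {\<omega>\<in>space M. hf \<omega> = h} \<in> sets M"
  shows "{\<omega>\<in>space M. P (hf \<omega>)} \<in> sets M"
proof -
  have "{\<omega>\<in>space M. P (hf \<omega>)} = (\<Union>h\<in>{h\<in>hf ` space M. P h}. {\<omega>\<in>space M. hf \<omega> = h})" by auto
  also have "\<dots> \<in> sets M" using assms by (intro sets.finite_UN) auto
  finally show ?thesis .
qed

locale probset = det d1 \<tau> T i ix \<theta>s \<Theta> g g' I mg Mg + prob_space M
  for d1 \<tau> T i and ix :: "nat \<Rightarrow> 'n::finite" and \<theta>s \<Theta> g g' I mg Mg and M :: "'a measure" +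
  fixes y :: "nat \<Rightarrow> int \<Rightarrow> 'a \<Rightarrow> real"
  assumes y_meas: "\<forall>j t. y j t \<in> borel_measurable M"
    and y_binary: "\<forall>j\<in>{1..d1}. \<forall>t\<in>{1 - int \<tau>..int T}. \<forall>\<omega>\<in>space M. y j t \<omega> \<in> {0, 1}"
    and model: "\<forall>t\<in>{1..int T}. \<forall>h :: nat \<Rightarrow> int \<Rightarrow> real.
        measure M {\<omega>\<in>space M. (\<forall>j'\<in>{1..d1}. \<forall>s\<in>{1 - int \<tau>..t - 1}. y j' s \<omega> = h j' s)
                              \<and> y i t \<omega> = 1}
        = g (wvec ix d1 \<tau> h t \<bullet> \<theta>s)
          * measure M {\<omega>\<in>space M. \<forall>j'\<in>{1..d1}. \<forall>s\<in>{1 - int \<tau>..t - 1}. y j' s \<omega> = h j' s}"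
begin

lemma y_meas' [measurable]: "y j t \<in> borel_measurable M" using y_meas by blast

definition yw :: "'a \<Rightarrow> nat \<Rightarrow> int \<Rightarrow> real" where "yw \<omega> = (\<lambda>j s. y j s \<omega>)"
definition hist :: "int \<Rightarrow> 'a \<Rightarrow> nat \<Rightarrow> int \<Rightarrow> real" where "hist t \<omega> = rst t (yw \<omega>)"

lemma binary_yw: "\<omega> \<in> space M \<Longrightarrow> binary (yw \<omega>)"
  using y_binary by (auto simp: binary_def yw_def)

definition Dset :: "int \<Rightarrow> (nat \<times> int) set" where "Dset t = {1..d1} \<times> {1 - int \<tau>..t - 1}"

lemma hist_range:
  assumes "t \<le> int T + 1"
  shows "finite (hist t ` space M)"
proof -
  let ?S = "{f. \<forall>x. (x \<in> Dset t \<longrightarrow> f x \<in> {0::real,1}) \<and> (x \<notin> Dset t \<longrightarrow> f x = 0)}"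
  have fin: "finite ?S" by (rule finite_set_of_finite_funs) (auto simp: Dset_def)
  have "hist t ` space M \<subseteq> (\<lambda>f j s. f (j, s)) ` ?S"
  proof
    fix h assume "h \<in> hist t ` space M"
    then obtain \<omega> where w: "\<omega> \<in> space M" "h = hist t \<omega>" by blast
    have "h = (\<lambda>f j s. f (j, s)) (case_prod h)" by simp
    moreover have "case_prod h \<in> ?S"
      using w y_binary assms by (auto simp: hist_def rst_def yw_def Dset_def)
    ultimately show "h \<in> (\<lambda>f j s. f (j, s)) ` ?S" by blast
  qed
  thus ?thesis using fin finite_subset by blast
qed

lemma A_eq:
  "{\<omega>\<in>space M. hist t \<omega> = h} = (if (\<forall>j s. \<not> (j \<in> {1..d1} \<and> s \<in> {1 - int \<tau>..t - 1}) \<longrightarrow> h j s = 0)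
      then {\<omega>\<in>space M. \<forall>j\<in>{1..d1}. \<forall>s\<in>{1 - int \<tau>..t - 1}. y j s \<omega> = h j s} else {})"
  by (auto simp: hist_def rst_def yw_def fun_eq_iff split: if_splits)

lemma A_meas: "{\<omega>\<in>space M. hist t \<omega> = h} \<in> sets M"
proof -
  have "{\<omega>\<in>space M. \<forall>j\<in>{1..d1}. \<forall>s\<in>{1 - int \<tau>..t - 1}. y j s \<omega> = h j s} \<in> sets M"
    by measurable
  thus ?thesis unfolding A_eq by simp
qed

lemma A_range: "h \<in> hist t ` space M \<Longrightarrow>
   {\<omega>\<in>space M. hist t \<omega> = h} = {\<omega>\<in>space M. \<forall>j\<in>{1..d1}. \<forall>s\<in>{1 - int \<tau>..t - 1}. y j s \<omega> = h j s}"
  unfolding A_eq by (auto simp: hist_def rst_def)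

lemma partition_integral:
  fixes f :: "'a \<Rightarrow> real"
  assumes "t \<le> int T + 1" "integrable M f"
  shows "integral\<^sup>L M f = (\<Sum>h\<in>hist t ` space M. integral\<^sup>L M (\<lambda>\<omega>. indicator {\<omega>\<in>space M. hist t \<omega> = h} \<omega> * f \<omega>))"
proof -
  have "integral\<^sup>L M f = integral\<^sup>L M (\<lambda>\<omega>. \<Sum>h\<in>hist t ` space M. indicator {\<omega>\<in>space M. hist t \<omega> = h} \<omega> * f \<omega>)"
  proof (rule Bochner_Integration.integral_cong[OF refl])
    fix \<omega> assume w: "\<omega> \<in> space M"
    have "(\<Sum>h\<in>hist t ` space M. indicator {\<omega>\<in>space M. hist t \<omega> = h} \<omega> * f \<omega>)
        = (\<Sum>h\<in>hist t ` space M. if hist t \<omega> = h then f \<omega> else 0)"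
      using w by (intro sum.cong) (auto simp: indicator_def)
    also have "\<dots> = f \<omega>" using w hist_range[OF assms(1)] by (simp add: sum.delta)
    finally show "f \<omega> = (\<Sum>h\<in>hist t ` space M. indicator {\<omega>\<in>space M. hist t \<omega> = h} \<omega> * f \<omega>)" by simp
  qed
  also have "\<dots> = (\<Sum>h\<in>hist t ` space M. integral\<^sup>L M (\<lambda>\<omega>. indicator {\<omega>\<in>space M. hist t \<omega> = h} \<omega> * f \<omega>))"
    using assms(2) A_meas by (intro Bochner_Integration.integral_sum) (auto intro!: ind_mult_integrable)
  finally show ?thesis .
qed

definition Z :: "nat \<Rightarrow> real \<Rightarrow> int \<Rightarrow> 'a \<Rightarrow> real" where
  "Z k lam t \<omega> = exp (lam * Sk k (yw \<omega>) t)"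

lemma Sk_hist: "t' \<le> t - 1 \<Longrightarrow> Sk k (yw \<omega>) t' = Sk k (hist t \<omega>) t'"
  unfolding hist_def by (simp add: Sk_rst)

lemma fm: "finite_measure M" by (rule finite_measure_axioms)

lemma Z_integrable:
  assumes "t \<le> int T"
  shows "integrable M (Z k lam t)"
proof -
  have e: "Z k lam t = (\<lambda>\<omega>. (\<lambda>h. exp (lam * Sk k h t)) (hist (t + 1) \<omega>))"
    unfolding Z_def using Sk_hist[of t "t + 1"] by auto
  have "integrable M (\<lambda>\<omega>. (\<lambda>h. exp (lam * Sk k h t)) (hist (t + 1) \<omega>))"
    using assms by (intro fin_range_integrable[where hf="hist (t + 1)" and F="\<lambda>h. exp (lam * Sk k h t)"] hist_range A_meas fm) auto
  thus ?thesis using e by simp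
qed

lemma Sk_split: "1 \<le> t \<Longrightarrow> Sk k yf t = Sk k yf (t - 1) + (g (wvec ix d1 \<tau> yf t \<bullet> \<theta>s) - yf i t) * (wvec ix d1 \<tau> yf t $ ix k)"
proof -
  assume t: "1 \<le> t"
  have "{1..t} = insert t {1..t - 1}" using t by auto
  thus ?thesis unfolding Sk_def by (simp add: add.commute)
qed

lemma step:
  assumes t: "1 \<le> t" "t \<le> int T" and k: "k < 1 + \<tau> * d1"
  shows "integral\<^sup>L M (Z k lam t) \<le> exp (lam\<^sup>2 / 8) * integral\<^sup>L M (Z k lam (t - 1))"
proof -
  let ?H = "hist t ` space M"
  define A where "A h = {\<omega>\<in>space M. hist t \<omega> = h}" for h
  define B where "B h = {\<omega>\<in>space M. hist t \<omega> = h \<and> y i t \<omega> = 1}" for h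
  define p where "p h = g (wvec ix d1 \<tau> h t \<bullet> \<theta>s)" for h
  define c where "c h = wvec ix d1 \<tau> h t $ ix k" for h
  define E where "E h = exp (lam * Sk k h (t - 1))" for h
  define f0 where "f0 h = exp (lam * ((p h - 0) * c h))" for h
  define f1 where "f1 h = exp (lam * ((p h - 1) * c h))" for h
  have tT: "t \<le> int T + 1" using t by simp
  have Ameas: "A h \<in> sets M" for h unfolding A_def by (rule A_meas)
  have Bmeas: "B h \<in> sets M" for h
  proof -
    have "B h = A h \<inter> {\<omega>\<in>space M. y i t \<omega> = 1}" by (auto simp: A_def B_def)
    also have "\<dots> \<in> sets M" using Ameas by measurable
    finally show ?thesis .
  qed
  have wh: "wvec ix d1 \<tau> (hist t \<omega>) t = wvec ix d1 \<tau> (yw \<omega>) t" for \<omega>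
    unfolding hist_def using t by (simp add: wvec_rst)
  have hprops: "0 \<le> p h \<and> p h \<le> 1 \<and> c h \<in> {0,1}" if "h \<in> ?H" for h
  proof -
    obtain \<omega> where w: "\<omega> \<in> space M" "h = hist t \<omega>" using \<open>h \<in> ?H\<close> by blast
    have "wvec ix d1 \<tau> (yw \<omega>) t \<bullet> \<theta>s \<in> I" using w_ok[OF binary_yw[OF w(1)] _ theta_star] t by auto
    hence p: "0 \<le> p h \<and> p h \<le> 1" using g_range w by (simp add: p_def wh)
    have "\<forall>j\<in>{1..d1}. \<forall>s. t - int \<tau> \<le> s \<and> s \<le> t - 1 \<longrightarrow> yw \<omega> j s \<in> {0,1}"
      using binary_yw[OF w(1)] t unfolding binary_def by auto
    from wvec_binary[OF tau ix_inj this] k have "c h \<in> {0,1}"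
      unfolding c_def w(2) wh by (cases "k = 0") auto
    with p show ?thesis by blast
  qed
  have ptw: "indicator (A h) \<omega> * Z k lam t \<omega> = E h * f0 h * indicator (A h) \<omega> + E h * (f1 h - f0 h) * indicator (B h) \<omega>"
    if w: "\<omega> \<in> space M" for h \<omega>
  proof (cases "hist t \<omega> = h")
    case True
    have Sk: "Sk k (yw \<omega>) t = Sk k h (t - 1) + (p h - y i t \<omega>) * c h"
      using Sk_split[OF t(1), of k "yw \<omega>"] Sk_hist[of "t - 1" t k \<omega>] True wh[of \<omega>]
      by (simp add: p_def c_def yw_def)
    have y01: "y i t \<omega> \<in> {0,1}" using y_binary i t w by auto
    show ?thesis
    proof (cases "y i t \<omega> = 1")
      case True
      have "Z k lam t \<omega> = E h * f1 h" unfolding Z_def E_def f1_def using Sk True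
        by (simp add: exp_add[symmetric] distrib_left)
      then show ?thesis using \<open>hist t \<omega> = h\<close> w True
        by (simp add: A_def B_def algebra_simps)
    next
      case False
      hence y0: "y i t \<omega> = 0" using y01 by auto
      have "Z k lam t \<omega> = E h * f0 h" unfolding Z_def E_def f0_def using Sk y0
        by (simp add: exp_add[symmetric] distrib_left)
      then show ?thesis using \<open>hist t \<omega> = h\<close> w y0
        by (simp add: A_def B_def algebra_simps)
    qed
  next
    case False
    then show ?thesis by (simp add: A_def B_def)
  qed
  have intZ: "integral\<^sup>L M (\<lambda>\<omega>. indicator (A h) \<omega> * Z k lam t \<omega>)
      = E h * f0 h * measure M (A h) + E h * (f1 h - f0 h) * measure M (B h)" for h
  proof -
    have "integral\<^sup>L M (\<lambda>\<omega>. indicator (A h) \<omega> * Z k lam t \<omega>)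
       = integral\<^sup>L M (\<lambda>\<omega>. E h * f0 h * indicator (A h) \<omega> + E h * (f1 h - f0 h) * indicator (B h) \<omega>)"
      by (rule Bochner_Integration.integral_cong[OF refl]) (rule ptw)
    also have "\<dots> = E h * f0 h * measure M (A h) + E h * (f1 h - f0 h) * measure M (B h)"
      using Ameas Bmeas by (simp add: emeasure_eq_measure)
    finally show ?thesis .
  qed
  have PB: "measure M (B h) = p h * measure M (A h)" if "h \<in> ?H" for h
  proof -
    have "B h = {\<omega>\<in>space M. (\<forall>j'\<in>{1..d1}. \<forall>s\<in>{1 - int \<tau>..t - 1}. y j' s \<omega> = h j' s) \<and> y i t \<omega> = 1}"
      using A_range[OF that] unfolding B_def by blast
    moreover have "A h = {\<omega>\<in>space M. \<forall>j'\<in>{1..d1}. \<forall>s\<in>{1 - int \<tau>..t - 1}. y j' s \<omega> = h j' s}"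
      using A_range[OF that] unfolding A_def by blast
    ultimately show ?thesis using model t unfolding p_def by auto
  qed
  have ptw0: "indicator (A h) \<omega> * Z k lam (t - 1) \<omega> = E h * indicator (A h) \<omega>" if w: "\<omega> \<in> space M" for h \<omega>
    using Sk_hist[of "t - 1" t k \<omega>] by (cases "hist t \<omega> = h") (auto simp: A_def Z_def E_def)
  have intZ0: "integral\<^sup>L M (\<lambda>\<omega>. indicator (A h) \<omega> * Z k lam (t - 1) \<omega>) = E h * measure M (A h)" for h
  proof -
    have "integral\<^sup>L M (\<lambda>\<omega>. indicator (A h) \<omega> * Z k lam (t - 1) \<omega>) = integral\<^sup>L M (\<lambda>\<omega>. E h * indicator (A h) \<omega>)"
      by (rule Bochner_Integration.integral_cong[OF refl]) (rule ptw0)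
    also have "\<dots> = E h * measure M (A h)" using Ameas by (simp add: emeasure_eq_measure)
    finally show ?thesis .
  qed
  have "integral\<^sup>L M (Z k lam t) = (\<Sum>h\<in>?H. integral\<^sup>L M (\<lambda>\<omega>. indicator (A h) \<omega> * Z k lam t \<omega>))"
    unfolding A_def using partition_integral[OF tT Z_integrable[OF t(2)]] .
  also have "\<dots> = (\<Sum>h\<in>?H. E h * measure M (A h) * (p h * f1 h + (1 - p h) * f0 h))"
    by (intro sum.cong refl) (simp add: intZ PB algebra_simps)
  also have "\<dots> \<le> (\<Sum>h\<in>?H. E h * measure M (A h) * exp (lam\<^sup>2 / 8))"
  proof (intro sum_mono mult_left_mono)
    fix h assume "h \<in> ?H"
    thus "p h * f1 h + (1 - p h) * f0 h \<le> exp (lam\<^sup>2 / 8)"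
      using hprops bern_hoeff[of "p h" "c h" lam] unfolding f0_def f1_def by blast
    show "0 \<le> E h * measure M (A h)" by (simp add: E_def)
  qed
  also have "\<dots> = exp (lam\<^sup>2 / 8) * (\<Sum>h\<in>?H. integral\<^sup>L M (\<lambda>\<omega>. indicator (A h) \<omega> * Z k lam (t - 1) \<omega>))"
    by (simp add: intZ0 sum_distrib_left mult.commute mult.left_commute)
  also have "(\<Sum>h\<in>?H. integral\<^sup>L M (\<lambda>\<omega>. indicator (A h) \<omega> * Z k lam (t - 1) \<omega>)) = integral\<^sup>L M (Z k lam (t - 1))"
    unfolding A_def using partition_integral[OF tT Z_integrable[of "t - 1"]] t by simp
  finally show ?thesis .
qed

lemma Z_bound:
  assumes k: "k < 1 + \<tau> * d1"
  shows "n \<le> T \<Longrightarrow> integral\<^sup>L M (Z k lam (int n)) \<le> exp (real n * lam\<^sup>2 / 8)"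
proof (induction n)
  case 0
  have "Z k lam 0 = (\<lambda>_. 1)" by (simp add: Z_def Sk_def fun_eq_iff)
  then show ?case by (simp add: prob_space)
next
  case (Suc m)
  have "integral\<^sup>L M (Z k lam (int (Suc m))) \<le> exp (lam\<^sup>2 / 8) * integral\<^sup>L M (Z k lam (int (Suc m) - 1))"
    using Suc.prems by (intro step k) auto
  also have "\<dots> \<le> exp (lam\<^sup>2 / 8) * exp (real m * lam\<^sup>2 / 8)"
    using Suc by (intro mult_left_mono) auto
  also have "\<dots> = exp (real (Suc m) * lam\<^sup>2 / 8)" by (simp add: exp_add[symmetric] algebra_simps)
  finally show ?case .
qed

lemma chernoff:
  assumes k: "k < 1 + \<tau> * d1" and lam: "lam \<ge> 0" and sg: "\<sigma> \<in> {1, -1}"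
  shows "measure M {\<omega>\<in>space M. a \<le> \<sigma> * Sk k (yw \<omega>) (int T)} \<le> exp (- lam * a) * exp (real T * lam\<^sup>2 / 8)"
proof -
  define B where "B = {\<omega>\<in>space M. a \<le> \<sigma> * Sk k (yw \<omega>) (int T)}"
  have "B = {\<omega>\<in>space M. (\<lambda>h. a \<le> \<sigma> * Sk k h (int T)) (hist (int T + 1) \<omega>)}"
    unfolding B_def using Sk_hist[of "int T" "int T + 1" k] by auto
  also have "\<dots> \<in> sets M" by (rule fin_range_sets[OF hist_range A_meas]) simp
  finally have Bm: "B \<in> sets M" .
  have "measure M B = integral\<^sup>L M (indicator B)" using Bm by (simp add: emeasure_eq_measure)
  also have "\<dots> \<le> integral\<^sup>L M (\<lambda>\<omega>. exp (- lam * a) * Z k (\<sigma> * lam) (int T) \<omega>)"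
  proof (rule integral_mono)
    show "integrable M (indicator B :: 'a \<Rightarrow> real)" using Bm by (intro integrable_real_indicator) (simp_all add: emeasure_eq_measure)
    show "integrable M (\<lambda>\<omega>. exp (- lam * a) * Z k (\<sigma> * lam) (int T) \<omega>)"
      by (intro integrable_mult_right Z_integrable) simp
    fix \<omega> assume w: "\<omega> \<in> space M"
    have e: "exp (- lam * a) * Z k (\<sigma> * lam) (int T) \<omega> = exp (lam * (\<sigma> * Sk k (yw \<omega>) (int T) - a))"
      by (simp add: Z_def exp_add[symmetric] algebra_simps)
    show "indicator B \<omega> \<le> exp (- lam * a) * Z k (\<sigma> * lam) (int T) \<omega>"
    proof (cases "\<omega> \<in> B")
      case True
      hence "0 \<le> lam * (\<sigma> * Sk k (yw \<omega>) (int T) - a)" using lam by (simp add: B_def)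
      then show ?thesis using True e by simp
    next
      case False then show ?thesis using e by simp
    qed
  qed
  also have "\<dots> = exp (- lam * a) * integral\<^sup>L M (Z k (\<sigma> * lam) (int T))" by simp
  also have "\<dots> \<le> exp (- lam * a) * exp (real T * (\<sigma> * lam)\<^sup>2 / 8)"
    using Z_bound[OF k, of T "\<sigma> * lam"] by (intro mult_left_mono) auto
  also have "(\<sigma> * lam)\<^sup>2 = lam\<^sup>2" using sg by (auto simp: power_mult_distrib)
  finally show ?thesis unfolding B_def .
qed

lemma Bad_meas: "{\<omega>\<in>space M. a \<le> \<sigma> * Sk k (yw \<omega>) (int T)} \<in> sets M"
proof -
  have "{\<omega>\<in>space M. a \<le> \<sigma> * Sk k (yw \<omega>) (int T)} = {\<omega>\<in>space M. (\<lambda>h. a \<le> \<sigma> * Sk k h (int T)) (hist (int T + 1) \<omega>)}"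
    using Sk_hist[of "int T" "int T + 1" k] by auto
  also have "\<dots> \<in> sets M" by (rule fin_range_sets[OF hist_range A_meas]) simp
  finally show ?thesis .
qed

lemma final:
  assumes eps: "0 < \<epsilon>" "\<epsilon> < 1"
  shows "measure M {\<omega>\<in>space M. \<forall>\<theta>h. weak_VI_sol (FT g ix d1 \<tau> T i (\<lambda>j t. y j t \<omega>)) \<Theta> \<theta>h \<longrightarrow>
        (let lam1 = min_eigenvalue (Wmat ix d1 \<tau> T (\<lambda>j t. y j t \<omega>));
             r = sqrt (real (1 + \<tau> * d1) * ln (2 * real (1 + \<tau> * d1) / \<epsilon>) / real T)
         in mg * lam1 * norm (\<theta>h - \<theta>s) \<le> r
            \<and> (lam1 > 0 \<longrightarrow> norm (\<theta>h - \<theta>s) \<le> r / (mg * lam1)))}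
     \<ge> 1 - \<epsilon>"
proof -
  define dd where "dd = real (1 + \<tau> * d1)"
  define L where "L = ln (2 * dd / \<epsilon>)"
  define s0 where "s0 = sqrt (L / real T)"
  define r where "r = sqrt (dd * L / real T)"
  have Tpos: "real T > 0" using T by simp
  have dd1: "dd \<ge> 1" unfolding dd_def by simp
  have gt1: "2 * dd / \<epsilon> > 1" using eps dd1 by (simp add: field_simps)
  hence Lpos: "L > 0" unfolding L_def by simp
  have s0pos: "s0 \<ge> 0" unfolding s0_def using Lpos Tpos by simp
  have Ts0: "real T * s0\<^sup>2 = L" unfolding s0_def using Lpos Tpos by simp
  have r_eq: "sqrt (dd * s0\<^sup>2) = r" unfolding r_def s0_def using Lpos Tpos by (simp add: field_simps)
  define Bd where "Bd = (\<lambda>(k, \<sigma>). {\<omega>\<in>space M. real T * s0 \<le> \<sigma> * Sk k (yw \<omega>) (int T)})"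
  define K where "K = {..<1 + \<tau> * d1} \<times> {1::real, -1}"
  have finK: "finite K" unfolding K_def by simp
  have cardK: "card K = 2 * (1 + \<tau> * d1)" unfolding K_def by (simp add: card_cartesian_product)
  have Bdm: "Bd ` K \<subseteq> sets M" unfolding Bd_def using Bad_meas by auto
  have eL: "exp (- L) = \<epsilon> / (2 * dd)" unfolding L_def using gt1 eps dd1 by (simp add: exp_minus)
  have each: "measure M (Bd x) \<le> \<epsilon> / (2 * dd)" if "x \<in> K" for x
  proof -
    obtain k \<sigma> where x: "x = (k, \<sigma>)" "k < 1 + \<tau> * d1" "\<sigma> \<in> {1, -1}" using \<open>x \<in> K\<close> unfolding K_def by auto
    have "measure M (Bd x) \<le> exp (- (4 * s0) * (real T * s0)) * exp (real T * (4 * s0)\<^sup>2 / 8)"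
      unfolding x Bd_def using chernoff[OF x(2) _ x(3), of "4 * s0" "real T * s0"] s0pos by simp
    also have "\<dots> = exp (- 2 * L)" using Ts0 by (simp add: exp_add[symmetric] power2_eq_square algebra_simps)
    also have "\<dots> = exp (- L) * exp (- L)" by (simp add: exp_add[symmetric])
    also have "\<dots> = (\<epsilon> / (2 * dd))\<^sup>2" using eL by (simp add: power2_eq_square)
    also have "\<dots> \<le> \<epsilon> / (2 * dd)"
    proof -
      have q: "0 \<le> \<epsilon> / (2 * dd)" "\<epsilon> / (2 * dd) \<le> 1" using eps dd1 by (auto simp: field_simps)
      show ?thesis unfolding power2_eq_square by (rule mult_left_le[OF q(2) q(1)])
    qed
    finally show ?thesis .
  qed
  let ?U = "\<Union>(Bd ` K)"
  have "measure M ?U \<le> (\<Sum>x\<in>K. measure M (Bd x))" by (rule finite_measure_subadditive_finite[OF finK Bdm])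
  also have "\<dots> \<le> (\<Sum>x\<in>K. \<epsilon> / (2 * dd))" by (rule sum_mono) (rule each)
  also have "\<dots> = real (card K) * (\<epsilon> / (2 * dd))" by simp
  also have "real (card K) = 2 * dd" using cardK unfolding dd_def by simp
  also have "2 * dd * (\<epsilon> / (2 * dd)) = \<epsilon>" using dd1 by simp
  finally have mU: "measure M ?U \<le> \<epsilon>" .
  define P where "P yf = (\<forall>\<theta>h. weak_VI_sol (FT g ix d1 \<tau> T i yf) \<Theta> \<theta>h \<longrightarrow>
        (let lam1 = min_eigenvalue (Wmat ix d1 \<tau> T yf);
             r = sqrt (real (1 + \<tau> * d1) * ln (2 * real (1 + \<tau> * d1) / \<epsilon>) / real T)
         in mg * lam1 * norm (\<theta>h - \<theta>s) \<le> r
            \<and> (lam1 > 0 \<longrightarrow> norm (\<theta>h - \<theta>s) \<le> r / (mg * lam1))))" for yf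
  define G where "G = {\<omega>\<in>space M. P (\<lambda>j t. y j t \<omega>)}"
  have G_eq: "G = {\<omega>\<in>space M. P (hist (int T + 1) \<omega>)}"
    unfolding G_def P_def hist_def yw_def by (simp add: FT_rst Wmat_rst)
  have Gm: "G \<in> sets M" unfolding G_eq by (rule fin_range_sets[OF hist_range A_meas]) simp
  have sub: "space M - ?U \<subseteq> G"
  proof
    fix \<omega> assume w: "\<omega> \<in> space M - ?U"
    have small: "\<bar>FT g ix d1 \<tau> T i (yw \<omega>) \<theta>s $ ix k\<bar> \<le> s0" if k: "k < 1 + \<tau> * d1" for k
    proof -
      have "(k, 1) \<in> K" "(k, -1) \<in> K" using k unfolding K_def by auto
      hence "\<omega> \<notin> Bd (k, 1)" "\<omega> \<notin> Bd (k, -1)" using w by auto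
      hence "\<bar>Sk k (yw \<omega>) (int T)\<bar> \<le> real T * s0" using w unfolding Bd_def by auto
      thus ?thesis using Tpos by (simp add: FT_comp abs_mult field_simps)
    qed
    have nF: "norm (FT g ix d1 \<tau> T i (yw \<omega>) \<theta>s) \<le> r"
      using norm_le_coords[of "FT g ix d1 \<tau> T i (yw \<omega>) \<theta>s" s0] small r_eq unfolding dd_def by auto
    have "P (yw \<omega>)"
      unfolding P_def Let_def
    proof (intro allI impI)
      fix \<theta>h assume sol: "weak_VI_sol (FT g ix d1 \<tau> T i (yw \<omega>)) \<Theta> \<theta>h"
      let ?l = "min_eigenvalue (Wmat ix d1 \<tau> T (yw \<omega>))"
      have m: "mg * ?l * norm (\<theta>h - \<theta>s) \<le> r"
        using det_main[OF binary_yw sol] w nF by auto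
      moreover have "0 < ?l \<longrightarrow> norm (\<theta>h - \<theta>s) \<le> r / (mg * ?l)"
        using m mg_pos by (auto simp: pos_le_divide_eq mult.commute mult.left_commute)
      ultimately show "mg * ?l * norm (\<theta>h - \<theta>s) \<le> sqrt (real (1 + \<tau> * d1) * ln (2 * real (1 + \<tau> * d1) / \<epsilon>) / real T) \<and>
          (0 < ?l \<longrightarrow> norm (\<theta>h - \<theta>s) \<le> sqrt (real (1 + \<tau> * d1) * ln (2 * real (1 + \<tau> * d1) / \<epsilon>) / real T) / (mg * ?l))"
        unfolding r_def L_def dd_def by simp
    qed
    thus "\<omega> \<in> G" using w unfolding G_def yw_def by auto
  qed
  have Um: "?U \<in> sets M" using Bdm finK by auto
  have "1 - \<epsilon> \<le> 1 - measure M ?U" using mU by simp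
  also have "\<dots> = measure M (space M - ?U)" using prob_compl[OF Um] by simp
  also have "\<dots> \<le> measure M G" by (rule finite_measure_mono[OF sub Gm])
  finally show ?thesis unfolding G_def P_def .
qed

end


theorem theorem1:
  fixes M :: "'a measure"
    and d1 \<tau> T i :: nat
    and ix :: "nat \<Rightarrow> 'n::finite"
    and y :: "nat \<Rightarrow> int \<Rightarrow> 'a \<Rightarrow> real"
    and \<theta>star :: "nat \<Rightarrow> real ^ 'n"
    and \<Theta> :: "(real ^ 'n) set"
    and g g' :: "real \<Rightarrow> real"
    and I :: "real set"
    and mg Mg :: real
  assumes d1: "d1 \<ge> 1" and tau: "\<tau> \<ge> 1" and T: "T \<ge> 1"
    and i: "i \<in> {1..d1}"
    and ix: "bij_betw ix {..<1 + \<tau> * d1} UNIV"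
    and Theta_convex: "convex \<Theta>" and Theta_compact: "compact \<Theta>"
    and Theta_nonneg: "\<forall>\<theta>\<in>\<Theta>. \<forall>k. \<theta> $ k \<ge> 0"
    and theta_star: "\<theta>star i \<in> \<Theta>"
    and I_interval: "is_interval I"
    and g_range: "\<forall>x\<in>I. 0 \<le> g x \<and> g x \<le> 1"
    and g_in_I: "\<forall>\<theta>\<in>\<Theta>. \<forall>w. (w $ ix 0 = 1 \<and> (\<forall>k\<in>{1..<1 + \<tau> * d1}. w $ ix k \<in> {0, 1}))
                    \<longrightarrow> w \<bullet> \<theta> \<in> I"
    and g_cont: "continuous_on I g"
    and g_mono: "mono_on I g"
    and g_deriv: "\<forall>x\<in>I. (g has_real_derivative g' x) (at x within I)"
    and mg_pos: "0 < mg"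
    and g'_bounds: "\<forall>x\<in>I. mg \<le> g' x \<and> g' x \<le> Mg"
    and M: "prob_space M"
    and y_meas: "\<forall>j t. y j t \<in> borel_measurable M"
    and y_binary: "\<forall>j\<in>{1..d1}. \<forall>t\<in>{1 - int \<tau>..int T}. \<forall>\<omega>\<in>space M. y j t \<omega> \<in> {0, 1}"
    and init_fixed: "\<forall>j\<in>{1..d1}. \<forall>t\<in>{1 - int \<tau>..0}. \<exists>c. \<forall>\<omega>\<in>space M. y j t \<omega> = c"
    and model: "\<forall>j\<in>{1..d1}. \<forall>t\<in>{1..int T}. \<forall>h :: nat \<Rightarrow> int \<Rightarrow> real.
        measure M {\<omega>\<in>space M. (\<forall>j'\<in>{1..d1}. \<forall>s\<in>{1 - int \<tau>..t - 1}. y j' s \<omega> = h j' s)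
                              \<and> y j t \<omega> = 1}
        = g (wvec ix d1 \<tau> h t \<bullet> \<theta>star j)
          * measure M {\<omega>\<in>space M. \<forall>j'\<in>{1..d1}. \<forall>s\<in>{1 - int \<tau>..t - 1}. y j' s \<omega> = h j' s}"
  shows "\<forall>\<epsilon>::real. 0 < \<epsilon> \<and> \<epsilon> < 1 \<longrightarrow>
     measure M {\<omega>\<in>space M. \<forall>\<theta>h. weak_VI_sol (FT g ix d1 \<tau> T i (\<lambda>j t. y j t \<omega>)) \<Theta> \<theta>h \<longrightarrow>
        (let lam1 = min_eigenvalue (Wmat ix d1 \<tau> T (\<lambda>j t. y j t \<omega>));
             r = sqrt (real (1 + \<tau> * d1) * ln (2 * real (1 + \<tau> * d1) / \<epsilon>) / real T)
         in mg * lam1 * norm (\<theta>h - \<theta>star i) \<le> r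
            \<and> (lam1 > 0 \<longrightarrow> norm (\<theta>h - \<theta>star i) \<le> r / (mg * lam1)))}
     \<ge> 1 - \<epsilon>"

proof -
  have P: "probset d1 \<tau> T i ix (\<theta>star i) \<Theta> g g' I mg Mg M y"
    unfolding probset_def probset_axioms_def det_def
    using assms by auto
  show ?thesis using probset.final[OF P] by blast
qed

end
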